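(* Let $\rho_1,\rho_2$ be pure $n$-qubit states ($n\ge1$), $O$ a Hermitian operator, and $p\in[0,1)$. Let $\widetilde{\rho}_j=(1-p)\rho_j+p\,\mathbb{I}/2^n$ ($j=1,2$) be their images under global depolarizing noise, and assume $\mathrm{Tr}[\rho_1O]\ne\mathrm{Tr}[\rho_2O]$. For an integer $M\ge2$ consider the two Virtual Distillation estimators $$C_m^{(A)}(\widetilde{\rho})=\frac{\mathrm{Tr}[\widetilde{\rho}^MO]}{\mathrm{Tr}[\widetilde{\rho}^M]},\qquad C_m^{(B)}(\widetilde{\rho})=\frac{\mathrm{Tr}[\widetilde{\rho}^MO]}{\lambda^M},$$ where $\lambda$ is the largest eigenvalue of $\widetilde{\rho}$, with error mitigation costs $\gamma^{(B)}=\lambda^{-2M}$ and $\gamma^{(A)}\ge(\mathrm{Tr}[\widetilde{\rho}^M])^{-2}$. Let $\chi^{(A)},\chi^{(B)}$ be the corresponding relative resolvabilities of the two points. Then $$\chi^{(A)}\le\chi^{(B)}=\Gamma(n,M,p):=\frac{1}{(1-p)^2}\Big[\Big(1-p+\frac{p}{2^n}\Big)^M-\Big(\frac{p}{2^n}\Big)^M\Big]^2,$$ and $\Gamma(n,M,p)\le1$ for all $n\ge1$, $M\ge2$, $p\in[0,1)$; moreover $\Gamma$ is monotonically decreasing in $M$ (with asymptotically exponential decay) for $n\ge1$, $M\ge2$, and $\Gamma(1,2,p)=1$ for all $p$.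
   Context: The error mitigation cost $\gamma$ is the ratio of the variance of the mitigated estimate to the variance of the noisy estimate $\mathrm{Tr}[\widetilde{\rho}O]$; the stated values/bounds for $\gamma^{(A)},\gamma^{(B)}$ are the model used (they follow from estimating $\mathrm{Tr}[\widetilde\rho O]$, $\mathrm{Tr}[\widetilde\rho^M O]$, $\mathrm{Tr}[\widetilde\rho^M]$ via ancilla measurements whose statistical variances are state-independent, with the $M$-copy variance no smaller than the single-copy one). Note $\lambda$ and $\mathrm{Tr}[\widetilde\rho^M]$ are the same for $\widetilde\rho_1,\widetilde\rho_2$. The relative resolvability of the two points is $\chi=\frac{1}{\gamma}\Big(\frac{C_m(\widetilde{\rho}_1)-C_m(\widetilde{\rho}_2)}{\mathrm{Tr}[\widetilde{\rho}_1O]-\mathrm{Tr}[\widetilde{\rho}_2O]}\Big)^2$. *)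

theory Defs
  imports "Jordan_Normal_Form.Char_Poly" "HOL-Library.Landau_Symbols"
begin

definition pure_state :: "nat \<Rightarrow> complex mat \<Rightarrow> bool" where
  "pure_state n \<rho> \<longleftrightarrow> (\<exists>v. v \<in> carrier_vec (2^n) \<and>
      (\<Sum>i<2^n. cmod (v $ i) ^ 2) = 1 \<and>
      \<rho> = mat (2^n) (2^n) (\<lambda>(i,j). v $ i * cnj (v $ j)))"

definition hermitian_op :: "nat \<Rightarrow> complex mat \<Rightarrow> bool" where
  "hermitian_op n Ob \<longleftrightarrow> Ob \<in> carrier_mat (2^n) (2^n) \<and>
      (\<forall>i<2^n. \<forall>j<2^n. Ob $$ (i,j) = cnj (Ob $$ (j,i)))"

definition mtrace :: "complex mat \<Rightarrow> complex" where
  "mtrace A = (\<Sum>i<dim_row A. A $$ (i,i))"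

definition depolarize :: "nat \<Rightarrow> real \<Rightarrow> complex mat \<Rightarrow> complex mat" where
  "depolarize n p \<rho> = complex_of_real (1 - p) \<cdot>\<^sub>m \<rho> +
      complex_of_real (p / 2^n) \<cdot>\<^sub>m 1\<^sub>m (2^n)"

text \<open>Largest eigenvalue (eigenvalues of Hermitian matrices are real).\<close>
definition largest_eigenvalue :: "complex mat \<Rightarrow> real" where
  "largest_eigenvalue A = Max {Re k | k. eigenvalue A k}"

text \<open>Virtual distillation estimators (traces involved are real for Hermitian inputs).\<close>
definition C_A :: "nat \<Rightarrow> complex mat \<Rightarrow> complex mat \<Rightarrow> real" where
  "C_A M Ob \<rho> = Re (mtrace (\<rho> ^\<^sub>m M * Ob)) / Re (mtrace (\<rho> ^\<^sub>m M))"

definition C_B :: "nat \<Rightarrow> complex mat \<Rightarrow> complex mat \<Rightarrow> real" where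
  "C_B M Ob \<rho> = Re (mtrace (\<rho> ^\<^sub>m M * Ob)) / largest_eigenvalue \<rho> ^ M"

definition resolvability ::
  "real \<Rightarrow> (complex mat \<Rightarrow> real) \<Rightarrow> complex mat \<Rightarrow> complex mat \<Rightarrow> complex mat \<Rightarrow> real" where
  "resolvability \<gamma> C Ob r1 r2 = (1 / \<gamma>) *
     ((C r1 - C r2) / (Re (mtrace (r1 * Ob)) - Re (mtrace (r2 * Ob)))) ^ 2"

definition Gamma :: "nat \<Rightarrow> nat \<Rightarrow> real \<Rightarrow> real" where
  "Gamma n M p = 1 / (1 - p)^2 * ((1 - p + p / 2^n) ^ M - (p / 2^n) ^ M) ^ 2"

end

theory Submission
  imports Defs
begin
lemma norm1:
  fixes v :: "complex vec"
  assumes "(\<Sum>i<N. cmod (v $ i) ^ 2) = 1"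
  shows "(\<Sum>k<N. v $ k * cnj (v $ k)) = 1"
proof -
  have "(\<Sum>k<N. v $ k * cnj (v $ k)) = (\<Sum>k<N. complex_of_real (cmod (v $ k) ^ 2))"
    by (intro sum.cong refl) (metis complex_norm_square of_real_power)
  also have "\<dots> = complex_of_real (\<Sum>k<N. cmod (v $ k) ^ 2)" by (simp only: of_real_sum)
  also have "\<dots> = 1" using assms by simp
  finally show ?thesis .
qed

definition projm :: "nat \<Rightarrow> complex vec \<Rightarrow> complex mat" where
  "projm N v = mat N N (\<lambda>(i,j). v $ i * cnj (v $ j))"

lemma projm_carrier[simp]: "projm N v \<in> carrier_mat N N"
  by (simp add: projm_def)

lemma P_idem:
  fixes v :: "complex vec"
  assumes "(\<Sum>i<N. cmod (v $ i) ^ 2) = 1"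
  shows "projm N v * projm N v = projm N v"
proof (rule eq_matI)
  fix i j assume ij: "i < dim_row (projm N v)" "j < dim_col (projm N v)"
  have "(projm N v * projm N v) $$ (i,j) = (\<Sum>k<N. (v $ i * cnj (v $ k)) * (v $ k * cnj (v $ j)))"
    using ij unfolding projm_def by (simp add: scalar_prod_def atLeast0LessThan)
  also have "\<dots> = v $ i * cnj (v $ j) * (\<Sum>k<N. v $ k * cnj (v $ k))"
    by (simp add: sum_distrib_left algebra_simps)
  also have "\<dots> = projm N v $$ (i,j)" using ij norm1[OF assms] unfolding projm_def by simp
  finally show "(projm N v * projm N v) $$ (i,j) = projm N v $$ (i,j)" .
qed (auto simp: projm_def)

lemma pow_form:
  fixes v :: "complex vec" and c1 c2 :: real
  assumes "(\<Sum>i<N. cmod (v $ i) ^ 2) = 1"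
  defines "A \<equiv> complex_of_real c1 \<cdot>\<^sub>m projm N v + complex_of_real c2 \<cdot>\<^sub>m 1\<^sub>m N"
  shows "A ^\<^sub>m M = complex_of_real ((c1+c2)^M - c2^M) \<cdot>\<^sub>m projm N v + complex_of_real (c2^M) \<cdot>\<^sub>m 1\<^sub>m N"
proof (induction M)
  case 0
  show ?case unfolding A_def by (intro eq_matI) (auto simp: projm_def)
next
  case (Suc M)
  define P where "P = projm N v"
  have P: "P \<in> carrier_mat N N" by (simp add: P_def)
  have PP: "P * P = P" unfolding P_def using P_idem[OF assms(1)] .
  define al where "al = complex_of_real ((c1+c2)^M - c2^M)"
  define be where "be = complex_of_real (c2^M)"
  define X where "X = complex_of_real c1 \<cdot>\<^sub>m P + complex_of_real c2 \<cdot>\<^sub>m 1\<^sub>m N"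
  have X: "X \<in> carrier_mat N N" using P by (simp add: X_def)
  have "A ^\<^sub>m Suc M = (al \<cdot>\<^sub>m P + be \<cdot>\<^sub>m 1\<^sub>m N) * X"
    using Suc by (simp add: al_def be_def X_def P_def A_def)
  also have "\<dots> = (al \<cdot>\<^sub>m P) * X + (be \<cdot>\<^sub>m 1\<^sub>m N) * X"
    using P X by (intro add_mult_distrib_mat[of _ N N]) auto
  also have "\<dots> = al \<cdot>\<^sub>m (P * X) + be \<cdot>\<^sub>m X"
    using P X by (simp add: mult_smult_assoc_mat[of _ N N _ N])
  also have "P * X = complex_of_real c1 \<cdot>\<^sub>m P + complex_of_real c2 \<cdot>\<^sub>m P"
    unfolding X_def using P
    by (simp add: mult_add_distrib_mat[of _ N N _ N] mult_smult_distrib[of _ N N _ N] PP)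
  finally have "A ^\<^sub>m Suc M = al \<cdot>\<^sub>m (complex_of_real c1 \<cdot>\<^sub>m P + complex_of_real c2 \<cdot>\<^sub>m P) + be \<cdot>\<^sub>m X" .
  also have "\<dots> = complex_of_real ((c1+c2)^Suc M - c2^Suc M) \<cdot>\<^sub>m P + complex_of_real (c2^Suc M) \<cdot>\<^sub>m 1\<^sub>m N"
    using P unfolding X_def al_def be_def
    by (intro eq_matI) (auto simp: algebra_simps)
  finally show ?case by (simp add: P_def)
qed

lemma mtrace_add: "A \<in> carrier_mat N N \<Longrightarrow> B \<in> carrier_mat N N \<Longrightarrow> mtrace (A + B) = mtrace A + mtrace B"
  by (simp add: mtrace_def sum.distrib)

lemma mtrace_smult: "A \<in> carrier_mat N N \<Longrightarrow> mtrace (k \<cdot>\<^sub>m A) = k * mtrace A"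
  by (auto simp: mtrace_def sum_distrib_left intro!: sum.cong)

lemma trace_form:
  fixes v :: "complex vec" and c1 c2 :: complex
  assumes O: "Ob \<in> carrier_mat N N"
  shows "mtrace ((c1 \<cdot>\<^sub>m projm N v + c2 \<cdot>\<^sub>m 1\<^sub>m N) * Ob) = c1 * mtrace (projm N v * Ob) + c2 * mtrace Ob"
proof -
  define P where "P = projm N v"
  have P: "P \<in> carrier_mat N N" by (simp add: P_def)
  have "(c1 \<cdot>\<^sub>m P + c2 \<cdot>\<^sub>m 1\<^sub>m N) * Ob = (c1 \<cdot>\<^sub>m P) * Ob + (c2 \<cdot>\<^sub>m 1\<^sub>m N) * Ob"
    using P O by (intro add_mult_distrib_mat[of _ N N]) auto
  also have "\<dots> = c1 \<cdot>\<^sub>m (P * Ob) + c2 \<cdot>\<^sub>m Ob"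
    using P O by (simp add: mult_smult_assoc_mat[of _ N N _ N])
  finally have "mtrace ((c1 \<cdot>\<^sub>m P + c2 \<cdot>\<^sub>m 1\<^sub>m N) * Ob) = mtrace (c1 \<cdot>\<^sub>m (P * Ob) + c2 \<cdot>\<^sub>m Ob)" by simp
  also have "\<dots> = c1 * mtrace (P * Ob) + c2 * mtrace Ob"
  proof -
    have "mtrace (c1 \<cdot>\<^sub>m (P * Ob) + c2 \<cdot>\<^sub>m Ob) = mtrace (c1 \<cdot>\<^sub>m (P * Ob)) + mtrace (c2 \<cdot>\<^sub>m Ob)"
      by (rule mtrace_add[of _ N]) (use P O in auto)
    also have "mtrace (c1 \<cdot>\<^sub>m (P * Ob)) = c1 * mtrace (P * Ob)"
      by (rule mtrace_smult[of _ N]) (use P O in auto)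
    also have "mtrace (c2 \<cdot>\<^sub>m Ob) = c2 * mtrace Ob"
      by (rule mtrace_smult[of _ N]) (use P O in auto)
    finally show ?thesis .
  qed
  finally show ?thesis by (simp add: P_def)
qed

lemma trace_pow:
  fixes v :: "complex vec" and c1 c2 :: complex
  assumes "(\<Sum>i<N. cmod (v $ i) ^ 2) = 1"
  shows "mtrace (c1 \<cdot>\<^sub>m projm N v + c2 \<cdot>\<^sub>m 1\<^sub>m N) = c1 + c2 * of_nat N"
proof -
  have "mtrace (c1 \<cdot>\<^sub>m projm N v + c2 \<cdot>\<^sub>m 1\<^sub>m N) = c1 * mtrace (projm N v) + c2 * mtrace (1\<^sub>m N)"
  proof -
    have "mtrace (c1 \<cdot>\<^sub>m projm N v + c2 \<cdot>\<^sub>m 1\<^sub>m N) = mtrace (c1 \<cdot>\<^sub>m projm N v) + mtrace (c2 \<cdot>\<^sub>m 1\<^sub>m N)"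
      by (rule mtrace_add[of _ N]) auto
    also have "mtrace (c1 \<cdot>\<^sub>m projm N v) = c1 * mtrace (projm N v)"
      by (rule mtrace_smult[of _ N]) auto
    also have "mtrace (c2 \<cdot>\<^sub>m 1\<^sub>m N) = c2 * mtrace (1\<^sub>m N)"
      by (rule mtrace_smult[of _ N]) auto
    finally show ?thesis .
  qed
  moreover have "mtrace (projm N v) = 1" using norm1[OF assms] by (simp add: mtrace_def projm_def)
  moreover have "mtrace (1\<^sub>m N :: complex mat) = of_nat N" by (simp add: mtrace_def)
  ultimately show ?thesis by simp
qed

lemma trace_real:
  fixes v :: "complex vec"
  assumes O: "Ob \<in> carrier_mat N N" and H: "\<forall>i<N. \<forall>j<N. Ob $$ (i,j) = cnj (Ob $$ (j,i))"
  shows "Im (mtrace (projm N v * Ob)) = 0"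
proof -
  have e: "mtrace (projm N v * Ob) = (\<Sum>i<N. \<Sum>k<N. v$i * cnj (v$k) * Ob$$(k,i))"
    using O by (simp add: mtrace_def projm_def scalar_prod_def atLeast0LessThan)
  have "cnj (mtrace (projm N v * Ob)) = (\<Sum>i<N. \<Sum>k<N. cnj (v$i) * v$k * cnj (Ob$$(k,i)))"
    unfolding e by simp
  also have "\<dots> = (\<Sum>i<N. \<Sum>k<N. cnj (v$i) * v$k * Ob$$(i,k))"
    by (intro sum.cong refl) (metis H lessThan_iff)
  also have "\<dots> = (\<Sum>k<N. \<Sum>i<N. cnj (v$i) * v$k * Ob$$(i,k))" by (rule sum.swap)
  also have "\<dots> = mtrace (projm N v * Ob)" unfolding e by (simp add: ac_simps)
  finally have "cnj (mtrace (projm N v * Ob)) = mtrace (projm N v * Ob)" .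
  then show ?thesis by (metis cnj.sel(2) neg_equal_zero)
qed

lemma mulvec_form:
  fixes v w :: "complex vec" and c1 c2 :: complex
  assumes w: "w \<in> carrier_vec N"
  shows "(c1 \<cdot>\<^sub>m projm N v + c2 \<cdot>\<^sub>m 1\<^sub>m N) *\<^sub>v w
     = (c1 * (\<Sum>j<N. cnj (v$j) * w$j)) \<cdot>\<^sub>v vec N (\<lambda>i. v$i) + c2 \<cdot>\<^sub>v w"
proof (rule eq_vecI)
  fix i assume i: "i < dim_vec ((c1 * (\<Sum>j<N. cnj (v$j) * w$j)) \<cdot>\<^sub>v vec N (\<lambda>i. v$i) + c2 \<cdot>\<^sub>v w)"
  then have iN: "i < N" using w by simp
  have "((c1 \<cdot>\<^sub>m projm N v + c2 \<cdot>\<^sub>m 1\<^sub>m N) *\<^sub>v w) $ i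
      = (\<Sum>j<N. (c1 * (v$i * cnj (v$j)) + c2 * (if j = i then 1 else 0)) * w$j)"
    using iN w by (simp add: projm_def scalar_prod_def atLeast0LessThan)
  also have "\<dots> = c1 * (\<Sum>j<N. cnj (v$j) * w$j) * v$i + (\<Sum>j<N. if j = i then c2 * w$j else 0)"
  proof -
    have "(\<Sum>j<N. (c1 * (v$i * cnj (v$j)) + c2 * (if j = i then 1 else 0)) * w$j)
       = (\<Sum>j<N. c1 * (v$i * cnj (v$j)) * w$j + (if j = i then c2 * w$j else 0))"
      by (intro sum.cong) (auto simp: algebra_simps)
    also have "\<dots> = (\<Sum>j<N. c1 * (v$i * cnj (v$j)) * w$j) + (\<Sum>j<N. if j = i then c2 * w$j else 0)"
      by (rule sum.distrib)
    also have "(\<Sum>j<N. c1 * (v$i * cnj (v$j)) * w$j) = c1 * (\<Sum>j<N. cnj (v$j) * w$j) * v$i"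
      by (simp add: sum_distrib_left sum_distrib_right algebra_simps)
    finally show ?thesis .
  qed
  also have "(\<Sum>j<N. if j = i then c2 * w$j else 0) = c2 * w$i"
    using iN by simp
  also have "c1 * (\<Sum>j<N. cnj (v$j) * w$j) * v$i + c2 * w$i = ((c1 * (\<Sum>j<N. cnj (v$j) * w$j)) \<cdot>\<^sub>v vec N (\<lambda>i. v$i) + c2 \<cdot>\<^sub>v w) $ i"
    using iN w by simp
  finally show "((c1 \<cdot>\<^sub>m projm N v + c2 \<cdot>\<^sub>m 1\<^sub>m N) *\<^sub>v w) $ i = ((c1 * (\<Sum>j<N. cnj (v$j) * w$j)) \<cdot>\<^sub>v vec N (\<lambda>i. v$i) + c2 \<cdot>\<^sub>v w) $ i" .
qed (use w in simp)

lemma largest_eig: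
  fixes v :: "complex vec" and c1 c2 :: real
  assumes v: "v \<in> carrier_vec N" and nv: "(\<Sum>i<N. cmod (v $ i) ^ 2) = 1" and c1: "c1 > 0"
  shows "largest_eigenvalue (complex_of_real c1 \<cdot>\<^sub>m projm N v + complex_of_real c2 \<cdot>\<^sub>m 1\<^sub>m N) = c1 + c2"
proof -
  define A where "A = complex_of_real c1 \<cdot>\<^sub>m projm N v + complex_of_real c2 \<cdot>\<^sub>m 1\<^sub>m N"
  have dA: "dim_row A = N" by (simp add: A_def)
  have n1: "(\<Sum>j<N. cnj (v$j) * v$j) = 1" using norm1[OF nv] by (simp add: mult.commute)
  have vv: "vec N (\<lambda>i. v$i) = v" using v by (intro eq_vecI) auto
  have S: "{Re k | k. eigenvalue A k} \<subseteq> {c1 + c2, c2}"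
  proof
    fix x assume "x \<in> {Re k | k. eigenvalue A k}"
    then obtain k where x: "x = Re k" and "eigenvalue A k" by blast
    then obtain w where w: "w \<in> carrier_vec N" and w0: "w \<noteq> 0\<^sub>v N" and ev: "A *\<^sub>v w = k \<cdot>\<^sub>v w"
      unfolding eigenvalue_def eigenvector_def dA by blast
    define c where "c = (\<Sum>j<N. cnj (v$j) * w$j)"
    have eq: "(complex_of_real c1 * c) \<cdot>\<^sub>v vec N (\<lambda>i. v$i) + complex_of_real c2 \<cdot>\<^sub>v w = k \<cdot>\<^sub>v w"
      using ev mulvec_form[OF w] unfolding A_def c_def by simp
    have ent: "complex_of_real c1 * c * v$i + complex_of_real c2 * w$i = k * w$i" if i: "i < N" for i
    proof -
      have "((complex_of_real c1 * c) \<cdot>\<^sub>v vec N (\<lambda>i. v$i) + complex_of_real c2 \<cdot>\<^sub>v w) $ i = (k \<cdot>\<^sub>v w) $ i"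
        using eq by simp
      then show ?thesis using i w by simp
    qed
    show "x \<in> {c1 + c2, c2}"
    proof (cases "k = complex_of_real c2")
      case True then show ?thesis using x by simp
    next
      case False
      then have kc: "k - complex_of_real c2 \<noteq> 0" by simp
      have wi: "w$i = complex_of_real c1 * c / (k - complex_of_real c2) * v$i" if i: "i < N" for i
        using ent[OF i] kc by (simp add: field_simps)
      have "c = (\<Sum>j<N. cnj (v$j) * w$j)" by (simp add: c_def)
      also have "\<dots> = (\<Sum>j<N. cnj (v$j) * (complex_of_real c1 * c / (k - complex_of_real c2) * v$j))"
        by (intro sum.cong refl) (simp add: wi)
      also have "\<dots> = complex_of_real c1 * c / (k - complex_of_real c2) * (\<Sum>j<N. cnj (v$j) * v$j)"
        by (simp add: sum_distrib_left ac_simps)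
      finally have cc: "c = complex_of_real c1 * c / (k - complex_of_real c2)" using n1 by simp
      have "c \<noteq> 0"
      proof
        assume c0: "c = 0"
        have wz: "w$i = 0" if "i < N" for i using wi[OF that] c0 by simp
        have "w = 0\<^sub>v N" by (rule eq_vecI) (use w wz in auto)
        then show False using w0 by simp
      qed
      then have "complex_of_real c1 / (k - complex_of_real c2) = 1" using cc
        by (metis mult.commute mult_cancel_left1 times_divide_eq_right)
      then have "k = complex_of_real (c1 + c2)" using kc by (simp add: field_simps)
      then show ?thesis using x by simp
    qed
  qed
  have mem: "c1 + c2 \<in> {Re k | k. eigenvalue A k}"
  proof -
    have v0: "v \<noteq> 0\<^sub>v N"
    proof
      assume "v = 0\<^sub>v N"
      then have "(\<Sum>i<N. cmod (v $ i) ^ 2) = 0" by simp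
      then show False using nv by simp
    qed
    have "A *\<^sub>v v = complex_of_real (c1 + c2) \<cdot>\<^sub>v v"
      unfolding A_def mulvec_form[OF v] n1 vv by (simp add: add_smult_distrib_vec)
    then have "eigenvalue A (complex_of_real (c1 + c2))"
      unfolding eigenvalue_def eigenvector_def dA using v v0 by blast
    then show ?thesis by force
  qed
  have "Max {Re k | k. eigenvalue A k} = c1 + c2"
  proof (rule Max_eqI)
    show "finite {Re k | k. eigenvalue A k}" using S by (rule finite_subset) simp
    show "y \<le> c1 + c2" if "y \<in> {Re k | k. eigenvalue A k}" for y using S that c1 by auto
  qed (rule mem)
  then show ?thesis unfolding largest_eigenvalue_def A_def .
qed


lemma diff_le:
  fixes a q :: real
  assumes q0: "0 \<le> q" and qa: "q \<le> a" and aq1: "a + q \<le> 1"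
  shows "a ^ Suc m - q ^ Suc m \<le> a - q"
proof (induction m)
  case 0 show ?case by simp
next
  case (Suc m)
  have q1: "q \<le> 1" using q0 qa aq1 by linarith
  have qm: "q ^ Suc m \<le> q" using power_decreasing[of 1 "Suc m" q] q0 q1 by simp
  have a0: "0 \<le> a" using q0 qa by linarith
  have "a ^ Suc (Suc m) - q ^ Suc (Suc m) = a * (a ^ Suc m - q ^ Suc m) + q ^ Suc m * (a - q)"
    by (simp add: algebra_simps)
  also have "\<dots> \<le> a * (a - q) + q * (a - q)"
    using Suc a0 qm qa by (intro add_mono mult_left_mono mult_right_mono) auto
  also have "\<dots> = (a + q) * (a - q)" by (simp add: algebra_simps)
  also have "\<dots> \<le> 1 * (a - q)" using aq1 qa by (intro mult_right_mono) auto
  finally show ?case by simp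
qed

lemma diff_step:
  fixes a q :: real
  assumes q0: "0 \<le> q" and qa: "q \<le> a" and q1a: "q \<le> 1 - a"
  shows "a ^ Suc (Suc m) - q ^ Suc (Suc m) \<le> a ^ Suc m - q ^ Suc m"
proof -
  define D where "D = a ^ Suc m - q ^ Suc m"
  have a0: "0 \<le> a" using q0 qa by linarith
  have pm: "q ^ m \<le> a ^ m" using q0 qa by (intro power_mono) auto
  have "D - a ^ m * (a - q) = q * (a ^ m - q ^ m)" by (simp add: D_def algebra_simps)
  also have "\<dots> \<ge> 0" using q0 pm by simp
  finally have "D \<ge> a ^ m * (a - q)" by simp
  moreover have "a ^ m * (a - q) \<ge> q ^ m * (a - q)" using pm qa by (intro mult_right_mono) auto
  ultimately have D1: "D \<ge> q ^ m * (a - q)" by linarith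
  have D0: "D \<ge> 0" using D1 q0 qa by (meson order_trans zero_le_mult_iff zero_le_power diff_ge_0_iff_ge)
  have "a ^ Suc (Suc m) - q ^ Suc (Suc m) = a * D + q * (q ^ m * (a - q))"
    by (simp add: D_def algebra_simps)
  also have "\<dots> \<le> a * D + q * D" using D1 q0 by (intro add_left_mono mult_left_mono) auto
  also have "\<dots> \<le> a * D + (1 - a) * D" using q1a D0 by (intro add_left_mono mult_right_mono) auto
  also have "\<dots> = D" by (simp add: algebra_simps)
  finally show ?thesis by (simp add: D_def)
qed

lemma params:
  fixes n :: nat and p :: real
  assumes "n \<ge> 1" "0 \<le> p" "p < 1"
  shows "0 \<le> p / 2^n" "p / 2^n \<le> 1 - p + p / 2^n" "(1 - p + p / 2^n) + p / 2^n \<le> 1"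
    "p / 2^n \<le> 1 - (1 - p + p / 2^n)"
proof -
  have t: "(2::real) ^ n \<ge> 2" using power_increasing[of 1 n "2::real"] assms(1) by simp
  have h: "p / 2^n \<le> p / 2" using t assms(2) by (intro divide_left_mono) auto
  show "0 \<le> p / 2^n" using assms by simp
  show "p / 2^n \<le> 1 - p + p / 2^n" using assms by simp
  show "(1 - p + p / 2^n) + p / 2^n \<le> 1" using h by linarith
  show "p / 2^n \<le> 1 - (1 - p + p / 2^n)" using h by linarith
qed

lemma Gamma_alt: "Gamma n M p = 1 / (1 - p)^2 * ((1 - p + p / 2^n) ^ M - (p / 2^n) ^ M) ^ 2"
  by (simp add: Gamma_def)

lemma Gamma_le1:
  assumes "n \<ge> 1" "M \<ge> 2" "0 \<le> p" "p < 1"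
  shows "Gamma n M p \<le> 1"
proof -
  define a q where "a = 1 - p + p / 2^n" and "q = p / 2^n"
  note pr = params[OF assms(1,3,4), folded a_def q_def]
  obtain m where M: "M = Suc m" using assms(2) by (cases M) auto
  have d1: "a ^ M - q ^ M \<le> 1 - p" using diff_le[OF pr(1,2,3), of m] M by (simp add: a_def q_def)
  have d0: "0 \<le> a ^ M - q ^ M" using pr by (simp add: power_mono)
  have "(a ^ M - q ^ M) ^ 2 \<le> (1 - p) ^ 2" using d0 d1 by (intro power_mono) auto
  moreover have "(1 - p)^2 > 0" using assms by simp
  moreover have "Gamma n M p = 1 / (1 - p)^2 * (a ^ M - q ^ M) ^ 2" by (simp add: Gamma_def a_def q_def)
  ultimately show ?thesis by simp
qed

lemma Gamma_step:
  assumes "n \<ge> 1" "M \<ge> 1" "0 \<le> p" "p < 1"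
  shows "Gamma n (Suc M) p \<le> Gamma n M p"
proof -
  define a q where "a = 1 - p + p / 2^n" and "q = p / 2^n"
  note pr = params[OF assms(1,3,4), folded a_def q_def]
  obtain m where M: "M = Suc m" using assms(2) by (cases M) auto
  have d1: "a ^ Suc M - q ^ Suc M \<le> a ^ M - q ^ M" using diff_step[OF pr(1,2,4), of m] M by simp
  have d0: "0 \<le> a ^ Suc M - q ^ Suc M" using pr by (simp add: power_mono del: power_Suc)
  have "(a ^ Suc M - q ^ Suc M) ^ 2 \<le> (a ^ M - q ^ M) ^ 2" using d0 d1 by (intro power_mono) auto
  moreover have "Gamma n M p = 1 / (1 - p)^2 * (a ^ M - q ^ M) ^ 2" by (simp add: Gamma_def a_def q_def)
  moreover have "Gamma n (Suc M) p = 1 / (1 - p)^2 * (a ^ Suc M - q ^ Suc M) ^ 2"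
    by (simp only: Gamma_def a_def q_def)
  ultimately show ?thesis by (simp del: power_Suc add: divide_right_mono)
qed

lemma Gamma_mono:
  assumes "n \<ge> 1" "0 \<le> p" "p < 1" "2 \<le> M1" "M1 \<le> M2"
  shows "Gamma n M2 p \<le> Gamma n M1 p"
  using assms(5)
proof (induction M2 rule: dec_induct)
  case base then show ?case by simp
next
  case (step k)
  have "Gamma n (Suc k) p \<le> Gamma n k p" using step assms by (intro Gamma_step) auto
  then show ?case using step by linarith
qed

lemma Gamma_asymp:
  assumes "n \<ge> 1" "0 < p" "p < 1"
  shows "\<exists>c r::real. c > 0 \<and> 0 < r \<and> r < 1 \<and> (\<lambda>M'. Gamma n M' p) \<sim>[at_top] (\<lambda>M'. c * r ^ M')"
proof -
  define a q where "a = 1 - p + p / 2^n" and "q = p / 2^n"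
  have t: "(2::real) ^ n \<ge> 2" using power_increasing[of 1 n "2::real"] assms(1) by simp
  have qp: "q < p" unfolding q_def using t assms(2) by (simp add: divide_less_eq)
  have q0: "0 \<le> q" using assms unfolding q_def by simp
  have aq: "a = 1 - p + q" by (simp add: a_def q_def)
  have a0: "a > 0" using assms q0 aq by simp
  have a1: "a < 1" using qp aq by simp
  have qa: "q / a < 1" "0 \<le> q / a" using a0 q0 aq assms(3) by (auto simp: divide_less_eq)
  define c where "c = 1 / (1 - p)^2"
  have c0: "c > 0" using assms by (simp add: c_def)
  have "(\<lambda>M'. Gamma n M' p) \<sim>[at_top] (\<lambda>M'. c * (a^2) ^ M')"
  proof (rule asymp_equivI')
    have eq: "Gamma n M p / (c * (a^2) ^ M) = (1 - (q / a) ^ M) ^ 2" for M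
    proof -
      have "Gamma n M p = c * (a ^ M - q ^ M) ^ 2" by (simp add: Gamma_def c_def a_def q_def)
      moreover have "(a ^ M - q ^ M) ^ 2 / (a^2)^M = (1 - (q / a) ^ M) ^ 2"
      proof -
        have aM: "a ^ M > 0" using a0 by simp
        have "1 - (q / a) ^ M = (a ^ M - q ^ M) / a ^ M" using aM a0 by (simp add: power_divide diff_divide_distrib)
        then have "(1 - (q / a) ^ M) ^ 2 = (a ^ M - q ^ M) ^ 2 / (a ^ M) ^ 2" by (simp add: power_divide)
        moreover have "(a ^ M) ^ 2 = (a ^ 2) ^ M" by (metis power_mult mult.commute)
        ultimately show ?thesis by simp
      qed
      ultimately show ?thesis using c0 by simp
    qed
    have "(\<lambda>M. (1 - (q / a) ^ M) ^ 2) \<longlonglongrightarrow> (1 - 0) ^ 2"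
      using qa by (intro tendsto_intros) auto
    then show "((\<lambda>M. Gamma n M p / (c * (a^2) ^ M)) \<longlongrightarrow> 1) at_top" by (simp add: eq)
  qed
  moreover have "0 < a^2" "a^2 < 1" using a0 a1 by (auto simp: power_less_one_iff)
  ultimately show ?thesis using c0 by blast
qed

lemma Gamma12: assumes "0 \<le> p" "p < 1" shows "Gamma 1 2 p = 1"
proof -
  have "(1 - p + p / 2 ^ 1) ^ 2 - (p / 2 ^ 1) ^ 2 = 1 - p" by (simp add: power2_eq_square field_simps)
  moreover have "(1 - p) ^ 2 \<noteq> 0" using assms by simp
  ultimately show ?thesis unfolding Gamma_def by simp
qed


lemma state_facts:
  fixes n M :: nat and p :: real and \<rho> Ob :: "complex mat"
  assumes ps: "pure_state n \<rho>" and h: "hermitian_op n Ob" and p0: "0 \<le> p" and p1: "p < 1"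
  shows "Re (mtrace (depolarize n p \<rho> ^\<^sub>m M * Ob)) =
           ((1 - p + p / 2^n) ^ M - (p / 2^n) ^ M) * Re (mtrace (\<rho> * Ob)) + (p / 2^n) ^ M * Re (mtrace Ob)"
    and "Re (mtrace (depolarize n p \<rho> * Ob)) = (1 - p) * Re (mtrace (\<rho> * Ob)) + (p / 2^n) * Re (mtrace Ob)"
    and "Re (mtrace (depolarize n p \<rho> ^\<^sub>m M)) = ((1 - p + p / 2^n) ^ M - (p / 2^n) ^ M) + (p / 2^n) ^ M * 2^n"
    and "largest_eigenvalue (depolarize n p \<rho>) = 1 - p + p / 2^n"
    and "Im (mtrace (\<rho> * Ob)) = 0"
proof -
  obtain v where v: "v \<in> carrier_vec (2^n)" and nv: "(\<Sum>i<2^n. cmod (v $ i) ^ 2) = 1"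
    and rho: "\<rho> = projm (2^n) v"
    using ps unfolding pure_state_def projm_def by blast
  have O: "Ob \<in> carrier_mat (2^n) (2^n)" and H: "\<forall>i<2^n. \<forall>j<2^n. Ob $$ (i,j) = cnj (Ob $$ (j,i))"
    using h unfolding hermitian_op_def by blast+
  have dep: "depolarize n p \<rho> = complex_of_real (1 - p) \<cdot>\<^sub>m projm (2^n) v + complex_of_real (p / 2^n) \<cdot>\<^sub>m 1\<^sub>m (2^n)"
    by (simp add: depolarize_def rho)
  have pw: "depolarize n p \<rho> ^\<^sub>m M = complex_of_real ((1 - p + p / 2^n) ^ M - (p / 2^n) ^ M) \<cdot>\<^sub>m projm (2^n) v
      + complex_of_real ((p / 2^n) ^ M) \<cdot>\<^sub>m 1\<^sub>m (2^n)"
    unfolding dep by (rule pow_form[OF nv])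
  show "Re (mtrace (depolarize n p \<rho> ^\<^sub>m M * Ob)) =
           ((1 - p + p / 2^n) ^ M - (p / 2^n) ^ M) * Re (mtrace (\<rho> * Ob)) + (p / 2^n) ^ M * Re (mtrace Ob)"
    unfolding pw trace_form[OF O] by (simp add: rho)
  show "Re (mtrace (depolarize n p \<rho> * Ob)) = (1 - p) * Re (mtrace (\<rho> * Ob)) + (p / 2^n) * Re (mtrace Ob)"
    unfolding dep trace_form[OF O] by (simp add: rho)
  show "Re (mtrace (depolarize n p \<rho> ^\<^sub>m M)) = ((1 - p + p / 2^n) ^ M - (p / 2^n) ^ M) + (p / 2^n) ^ M * 2^n"
    unfolding pw trace_pow[OF nv] by simp
  show "largest_eigenvalue (depolarize n p \<rho>) = 1 - p + p / 2^n"
    unfolding dep using largest_eig[OF v nv, of "1 - p" "p / 2^n"] p1 by simp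
  show "Im (mtrace (\<rho> * Ob)) = 0" unfolding rho by (rule trace_real[OF O H])
qed


lemma aux_div: "(d::real) \<noteq> 0 \<Longrightarrow> b \<noteq> 0 \<Longrightarrow> c \<noteq> 0 \<Longrightarrow> x * d / b / (c * d) = x / (b * c)"
  by (simp add: field_simps)

theorem proposition3:
  fixes n M :: nat and p \<gamma>A :: real and \<rho>1 \<rho>2 Ob :: "complex mat"
  assumes "n \<ge> 1" and "M \<ge> 2" and "0 \<le> p" and "p < 1"
    and "pure_state n \<rho>1" and "pure_state n \<rho>2" and "hermitian_op n Ob"
    and "mtrace (\<rho>1 * Ob) \<noteq> mtrace (\<rho>2 * Ob)"
    and "\<gamma>A \<ge> 1 / (Re (mtrace (depolarize n p \<rho>1 ^\<^sub>m M))) ^ 2"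
  shows "resolvability \<gamma>A (C_A M Ob) Ob (depolarize n p \<rho>1) (depolarize n p \<rho>2)
           \<le> resolvability (1 / largest_eigenvalue (depolarize n p \<rho>1) ^ (2 * M)) (C_B M Ob) Ob
                (depolarize n p \<rho>1) (depolarize n p \<rho>2)
       \<and> resolvability (1 / largest_eigenvalue (depolarize n p \<rho>1) ^ (2 * M)) (C_B M Ob) Ob
                (depolarize n p \<rho>1) (depolarize n p \<rho>2) = Gamma n M p
       \<and> (\<forall>n'::nat. \<forall>M'::nat. \<forall>p'::real. n' \<ge> 1 \<longrightarrow> M' \<ge> 2 \<longrightarrow> 0 \<le> p' \<longrightarrow> p' < 1 \<longrightarrow>
            Gamma n' M' p' \<le> 1)
       \<and> (\<forall>n'::nat. \<forall>p'::real. n' \<ge> 1 \<longrightarrow> 0 \<le> p' \<longrightarrow> p' < 1 \<longrightarrow>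
            (\<forall>M1 M2::nat. 2 \<le> M1 \<longrightarrow> M1 \<le> M2 \<longrightarrow> Gamma n' M2 p' \<le> Gamma n' M1 p'))
       \<and> (\<forall>n'::nat. \<forall>p'::real. n' \<ge> 1 \<longrightarrow> 0 < p' \<longrightarrow> p' < 1 \<longrightarrow>
            (\<exists>c r::real. c > 0 \<and> 0 < r \<and> r < 1 \<and>
               (\<lambda>M'. Gamma n' M' p') \<sim>[at_top] (\<lambda>M'. c * r ^ M')))
       \<and> (\<forall>p'::real. 0 \<le> p' \<longrightarrow> p' < 1 \<longrightarrow> Gamma 1 2 p' = 1)"
proof -
  define q where "q = p / 2^n"
  define a where "a = 1 - p + p / 2^n"
  define al where "al = a ^ M - q ^ M"
  define be where "be = q ^ M"
  define x1 where "x1 = Re (mtrace (\<rho>1 * Ob))"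
  define x2 where "x2 = Re (mtrace (\<rho>2 * Ob))"
  define t where "t = Re (mtrace Ob)"
  define T where "T = al + be * 2^n"
  define A1 where "A1 = depolarize n p \<rho>1"
  define A2 where "A2 = depolarize n p \<rho>2"
  note f1 = state_facts(1)[OF assms(5,7,3,4), of M] state_facts(2)[OF assms(5,7,3,4)]
    state_facts(3)[OF assms(5,7,3,4), of M] state_facts(4)[OF assms(5,7,3,4)] state_facts(5)[OF assms(5,7,3,4)]
  note f1 = f1[folded q_def a_def al_def be_def x1_def t_def A1_def]
  note f2 = state_facts(1)[OF assms(6,7,3,4), of M] state_facts(2)[OF assms(6,7,3,4)]
    state_facts(3)[OF assms(6,7,3,4), of M] state_facts(4)[OF assms(6,7,3,4)] state_facts(5)[OF assms(6,7,3,4)]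
  note f2 = f2[folded q_def a_def al_def be_def x2_def t_def A2_def]
  have aq: "a = 1 - p + q" by (simp add: a_def q_def)
  have q0: "0 \<le> q" using assms(3) by (simp add: q_def)
  have a0: "a > 0" using aq q0 assms(4) by simp
  have p1: "1 - p \<noteq> 0" using assms(4) by simp
  have x12: "x1 \<noteq> x2"
  proof
    assume "x1 = x2"
    then have "mtrace (\<rho>1 * Ob) = mtrace (\<rho>2 * Ob)" using f1(5) f2(5) unfolding x1_def x2_def
      by (simp add: complex_eq_iff)
    then show False using assms(8) by simp
  qed
  have al0: "0 \<le> al" unfolding al_def using q0 aq assms(4) by (simp add: power_mono)
  have be0: "0 \<le> be" unfolding be_def using q0 by simp
  have T_ge: "T \<ge> a ^ M"
  proof -
    have "(1::real) \<le> 2^n" by simp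
    then have "be * 1 \<le> be * 2^n" using be0 by (intro mult_left_mono) auto
    then show ?thesis unfolding T_def al_def be_def by simp
  qed
  have T0: "T > 0" using T_ge a0 by (meson less_le_trans zero_less_power)
  have trM1: "Re (mtrace (A1 ^\<^sub>m M)) = T" using f1(3) by (simp add: T_def)
  have D: "Re (mtrace (A1 * Ob)) - Re (mtrace (A2 * Ob)) = (1 - p) * (x1 - x2)"
    using f1(2) f2(2) by (simp add: algebra_simps)
  have CA: "C_A M Ob A1 - C_A M Ob A2 = al * (x1 - x2) / T"
  proof -
    have "C_A M Ob A1 - C_A M Ob A2 = ((al * x1 + be * t) - (al * x2 + be * t)) / T"
      unfolding C_A_def f1(1,3) f2(1,3) T_def by (rule diff_divide_distrib[symmetric])
    also have "\<dots> = al * (x1 - x2) / T" by (simp add: algebra_simps)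
    finally show ?thesis .
  qed
  have CB: "C_B M Ob A1 - C_B M Ob A2 = al * (x1 - x2) / a ^ M"
  proof -
    have "C_B M Ob A1 - C_B M Ob A2 = ((al * x1 + be * t) - (al * x2 + be * t)) / a ^ M"
      unfolding C_B_def f1(1,4) f2(1,4) by (rule diff_divide_distrib[symmetric])
    also have "\<dots> = al * (x1 - x2) / a ^ M" by (simp add: algebra_simps)
    finally show ?thesis .
  qed
  have G: "Gamma n M p = al ^ 2 / (1 - p) ^ 2"
    by (simp add: Gamma_def al_def a_def q_def)
  have RB: "resolvability (1 / largest_eigenvalue A1 ^ (2 * M)) (C_B M Ob) Ob A1 A2 = Gamma n M p"
  proof -
    have "resolvability (1 / largest_eigenvalue A1 ^ (2 * M)) (C_B M Ob) Ob A1 A2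
        = a ^ (2 * M) * (al * (x1 - x2) / a ^ M / ((1 - p) * (x1 - x2))) ^ 2"
      unfolding resolvability_def f1(4) CB D by simp
    also have "\<dots> = al ^ 2 / (1 - p) ^ 2"
    proof -
      have d: "x1 - x2 \<noteq> 0" using x12 by simp
      have b: "a ^ M \<noteq> 0" using a0 by simp
      have e1: "al * (x1 - x2) / a ^ M / ((1 - p) * (x1 - x2)) = al / (a ^ M * (1 - p))"
        using aux_div[OF d b p1] .
      have e2: "a ^ (2 * M) = (a ^ M) ^ 2" by (metis power_mult mult.commute)
      have "a ^ (2 * M) * (al / (a ^ M * (1 - p))) ^ 2 = (a ^ M) ^ 2 * al ^ 2 / ((a ^ M) ^ 2 * (1 - p) ^ 2)"
        unfolding e2 by (simp add: power_divide power_mult_distrib)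
      also have "\<dots> = al ^ 2 / (1 - p) ^ 2" using b by (simp only: mult_divide_mult_cancel_left_if power_eq_0_iff) simp
      finally show ?thesis unfolding e1 .
    qed
    finally show ?thesis using G by simp
  qed
  have RA: "resolvability \<gamma>A (C_A M Ob) Ob A1 A2 \<le> Gamma n M p"
  proof -
    have gA: "\<gamma>A \<ge> 1 / T ^ 2" using assms(9) trM1 unfolding A1_def by simp
    have gpos: "1 / T ^ 2 > 0" using T0 by simp
    have ig: "1 / \<gamma>A \<le> T ^ 2"
    proof -
      have gp: "\<gamma>A > 0" using gA gpos by linarith
      have "1 / \<gamma>A \<le> 1 / (1 / T ^ 2)"
        by (rule divide_left_mono[OF gA]) (simp, rule mult_pos_pos[OF gp gpos])
      then show ?thesis by simp
    qed
    have "resolvability \<gamma>A (C_A M Ob) Ob A1 A2 = 1 / \<gamma>A * (al / (T * (1 - p))) ^ 2"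
      unfolding resolvability_def CA D
      using aux_div[of "x1 - x2" T "1 - p" al] x12 T0 p1 by simp
    also have "\<dots> \<le> T ^ 2 * (al / (T * (1 - p))) ^ 2"
      using ig by (intro mult_right_mono) auto
    also have "\<dots> = al ^ 2 / (1 - p) ^ 2" using T0 p1 by (simp add: power_divide power_mult_distrib)
    finally show ?thesis using G by simp
  qed
  show ?thesis
    using RA RB Gamma_le1 Gamma_mono Gamma_asymp Gamma12 unfolding A1_def A2_def by auto
qed

end
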